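(* For any constant $\epsilon\in(0,1)$, any $\alpha\in(0,1)$ and any $\rho\ge1$, IPR is a $(1+\epsilon)(1+\alpha)$-consistent partitioning algorithm.
   Context: Scheduling with Speed Predictions (SSP). An instance consists of $n$ jobs with processing times $p_1,\dots,p_n\ge0$ and $m$ machines with true speeds $s_1,\dots,s_m>0$; job $j$ on machine $i$ takes time $p_j/s_i$. For a bag $B$, $p(B)=\sum_{j\in B}p_j$. In the partitioning stage the algorithm receives $\mathbf p$ and predicted speeds $\hat{\mathbf s}\ge0$ (not $\mathbf s$) and partitions $[n]$ into $m$ possibly empty bags. In the scheduling stage $\mathbf s$ is revealed and each bag is assigned whole to a machine; the makespan is $\max_i(\text{total processing time on } i)/s_i$. $opt(\mathbf p,\mathbf s)$ is the minimum makespan of assigning individual jobs knowing $\mathbf s$. A partitioning algorithm is $c$-consistent if the two-stage algorithm that runs it and then assigns the bags to the machines with minimum possible makespan has makespan at most $c\cdot opt(\mathbf p,\mathbf s)$ whenever $\hat{\mathbf s}=\mathbf s$. Algorithm IPR. Input: predicted speeds $\hat s_1\ge\dots\ge\hat s_m$, $\mathbf p$, $\alpha$, accuracy $\epsilon\in(0,1)$, $\rho\ge1$. (1) Compute a partition $B_1,\dots,B_m$ with $p(B_1)\ge\dots\ge p(B_m)$ such that putting $B_i$ on machine $i$ has makespan at most $(1+\epsilon)opt(\mathbf p,\hat{\mathbf s})$ under speeds $\hat{\mathbf s}$. (2) Set $\overline{OPT}_C=\max_i p(B_i)/\hat s_i$ and $\mathcal M_i=\{B_i\}$. (3) While $\max\{p(B):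 B\in\cup_i\mathcal M_i, |B|\ge2\}>\rho\min\{p(B):B\in\cup_i\mathcal M_i\}$: compute $\mathcal M'=$ LPT-Rebalance$(\mathcal M)$; if $\max_i\sum_{B\in\mathcal M'_i}p(B)/\hat s_i>(1+\alpha)\overline{OPT}_C$ return the current bags $\cup_i\mathcal M_i$; else $\mathcal M\leftarrow\mathcal M'$. (4) Return the bags $\cup_i\mathcal M_i$. LPT-Rebalance: let $B_{\min}$ be a bag of minimum $p(B)$ over all bags, $\mathcal M_{\min}$ its collection, $\mathcal M_{\max}$ a collection containing a bag of maximum $p(B)$ among bags with at least two jobs. Move $B_{\min}$ into $\mathcal M_{\max}$, let $\ell=|\mathcal M_{\max}|$, pool its jobs and redistribute them into $\ell$ new bags by LPT (jobs in non-increasing processing time, each into a currently least-loaded bag); these form the new $\mathcal M_{\max}$. *)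

theory Defs
  imports Complex_Main "HOL-Library.FuncSet"
begin

(* Jobs are 0..<n with processing times p :: nat => real; machines are 0..<m
   with speeds s :: nat => real.  A bag is a set of jobs. *)

definition bagp :: "(nat \<Rightarrow> real) \<Rightarrow> nat set \<Rightarrow> real" where
  "bagp p B = (\<Sum>j\<in>B. p j)"

definition mk :: "nat \<Rightarrow> (nat \<Rightarrow> real) \<Rightarrow> (nat \<Rightarrow> real) \<Rightarrow> real" where
  "mk m load s = Max ((\<lambda>i. load i / s i) ` {..<m})"

definition opt :: "nat \<Rightarrow> nat \<Rightarrow> (nat \<Rightarrow> real) \<Rightarrow> (nat \<Rightarrow> real) \<Rightarrow> real" where
  "opt n m p s = Min ((\<lambda>f. mk m (\<lambda>i. \<Sum>j\<in>{j. j < n \<and> f j = i}. p j) s)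
                      ` ({..<n} \<rightarrow>\<^sub>E {..<m}))"

definition bag_opt :: "nat \<Rightarrow> (nat \<Rightarrow> real) \<Rightarrow> (nat \<Rightarrow> real) \<Rightarrow> nat set list \<Rightarrow> real" where
  "bag_opt m p s bs = Min ((\<lambda>f. mk m (\<lambda>i. \<Sum>k\<in>{k. k < length bs \<and> f k = i}. bagp p (bs ! k)) s)
                      ` ({..<length bs} \<rightarrow>\<^sub>E {..<m}))"

definition is_partition :: "nat \<Rightarrow> nat \<Rightarrow> (nat \<Rightarrow> nat set) \<Rightarrow> bool" where
  "is_partition n m B \<longleftrightarrow> (\<Union>i<m. B i) = {..<n} \<and>
     (\<forall>i<m. \<forall>i'<m. i \<noteq> i' \<longrightarrow> B i \<inter> B i' = {})"

(* LPT: process the job list in the given order, each job into a currently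
   least-loaded bag (ties broken arbitrarily) *)
inductive lpt_run :: "(nat \<Rightarrow> real) \<Rightarrow> nat list \<Rightarrow> nat set list \<Rightarrow> nat set list \<Rightarrow> bool"
  for p where
  lpt_nil: "lpt_run p [] Bs Bs"
| lpt_cons: "\<lbrakk> k < length Bs; \<forall>k'<length Bs. bagp p (Bs ! k) \<le> bagp p (Bs ! k');
              lpt_run p js (Bs[k := insert j (Bs ! k)]) R \<rbrakk> \<Longrightarrow> lpt_run p (j # js) Bs R"

definition lpt :: "(nat \<Rightarrow> real) \<Rightarrow> nat set \<Rightarrow> nat \<Rightarrow> nat set list \<Rightarrow> bool" where
  "lpt p J l R \<longleftrightarrow> (\<exists>js. distinct js \<and> set js = J \<and> sorted_wrt (\<lambda>a b. p b \<le> p a) js \<and>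
                        lpt_run p js (replicate l {}) R)"

definition all_bags :: "nat \<Rightarrow> (nat \<Rightarrow> nat set list) \<Rightarrow> nat set list" where
  "all_bags m M = concat (map M [0..<m])"

(* M' is a possible result of LPT-Rebalance(M) *)
definition rebal :: "nat \<Rightarrow> (nat \<Rightarrow> real) \<Rightarrow> (nat \<Rightarrow> nat set list) \<Rightarrow> (nat \<Rightarrow> nat set list) \<Rightarrow> bool" where
  "rebal m p M M' \<longleftrightarrow> (\<exists>imin kmin imax kmax Bs'.
     imin < m \<and> kmin < length (M imin) \<and>
     (\<forall>i<m. \<forall>k<length (M i). bagp p (M imin ! kmin) \<le> bagp p (M i ! k)) \<and>
     imax < m \<and> kmax < length (M imax) \<and> 2 \<le> card (M imax ! kmax) \<and>
     (\<forall>i<m. \<forall>k<length (M i). 2 \<le> card (M i ! k) \<longrightarrow> bagp p (M i ! k) \<le> bagp p (M imax ! kmax)) \<and>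
     (let bmin = M imin ! kmin;
          newmax = (if imin = imax then M imax else M imax @ [bmin]);
          newmin = take kmin (M imin) @ drop (Suc kmin) (M imin)
      in lpt p (\<Union>(set newmax)) (length newmax) Bs' \<and>
         M' = (if imin = imax then M(imax := Bs') else M(imin := newmin, imax := Bs'))))"

definition loop_cond :: "nat \<Rightarrow> (nat \<Rightarrow> real) \<Rightarrow> real \<Rightarrow> (nat \<Rightarrow> nat set list) \<Rightarrow> bool" where
  "loop_cond m p \<rho> M \<longleftrightarrow> (let A = set (all_bags m M) in
     (\<exists>B\<in>A. 2 \<le> card B) \<and>
     Max (bagp p ` {B\<in>A. 2 \<le> card B}) > \<rho> * Min (bagp p ` A))"

definition coll_makespan :: "nat \<Rightarrow> (nat \<Rightarrow> real) \<Rightarrow> (nat \<Rightarrow> real) \<Rightarrow> (nat \<Rightarrow> nat set list) \<Rightarrow> real" where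
  "coll_makespan m p sh M = mk m (\<lambda>i. sum_list (map (bagp p) (M i))) sh"

(* step (3) of IPR: possible outputs of the while loop from state M,
   speeds sh (already sorted), threshold OPT_C = optc *)
inductive ipr_loop :: "nat \<Rightarrow> (nat \<Rightarrow> real) \<Rightarrow> (nat \<Rightarrow> real) \<Rightarrow> real \<Rightarrow> real \<Rightarrow> real \<Rightarrow>
    (nat \<Rightarrow> nat set list) \<Rightarrow> nat set list \<Rightarrow> bool"
  for m p sh \<alpha> optc \<rho> where
  loop_stop: "\<not> loop_cond m p \<rho> M \<Longrightarrow> ipr_loop m p sh \<alpha> optc \<rho> M (all_bags m M)"
| loop_reject: "\<lbrakk> loop_cond m p \<rho> M; rebal m p M M'; coll_makespan m p sh M' > (1 + \<alpha>) * optc \<rbrakk>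
     \<Longrightarrow> ipr_loop m p sh \<alpha> optc \<rho> M (all_bags m M)"
| loop_accept: "\<lbrakk> loop_cond m p \<rho> M; rebal m p M M'; \<not> coll_makespan m p sh M' > (1 + \<alpha>) * optc;
     ipr_loop m p sh \<alpha> optc \<rho> M' out \<rbrakk> \<Longrightarrow> ipr_loop m p sh \<alpha> optc \<rho> M out"

(* bs is a possible output of IPR on predicted speeds sh.  Machines are first
   relabelled by a bijection sigma so that the predicted speeds are
   non-increasing (s_1 >= ... >= s_m). *)
definition ipr_out :: "nat \<Rightarrow> nat \<Rightarrow> (nat \<Rightarrow> real) \<Rightarrow> (nat \<Rightarrow> real) \<Rightarrow> real \<Rightarrow> real \<Rightarrow> real \<Rightarrow>
    nat set list \<Rightarrow> bool" where
  "ipr_out n m p sh \<alpha> \<epsilon> \<rho> bs \<longleftrightarrow> (\<exists>\<sigma> B.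
     bij_betw \<sigma> {..<m} {..<m} \<and>
     (\<forall>i<m. \<forall>i'<m. i \<le> i' \<longrightarrow> sh (\<sigma> i') \<le> sh (\<sigma> i)) \<and>
     is_partition n m B \<and>
     (\<forall>i<m. \<forall>i'<m. i \<le> i' \<longrightarrow> bagp p (B i') \<le> bagp p (B i)) \<and>
     mk m (\<lambda>i. bagp p (B i)) (sh \<circ> \<sigma>) \<le> (1 + \<epsilon>) * opt n m p sh \<and>
     ipr_loop m p (sh \<circ> \<sigma>) \<alpha> (mk m (\<lambda>i. bagp p (B i)) (sh \<circ> \<sigma>)) \<rho>
        (\<lambda>i. if i < m then [B i] else []) bs)"

definition ipr_consistent :: "real \<Rightarrow> real \<Rightarrow> real \<Rightarrow> real \<Rightarrow> bool" where
  "ipr_consistent \<alpha> \<epsilon> \<rho> c \<longleftrightarrow> (\<forall>n m p s bs.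
     0 < m \<and> (\<forall>j<n. 0 \<le> p j) \<and> (\<forall>i<m. 0 < s i) \<and> ipr_out n m p s \<alpha> \<epsilon> \<rho> bs
     \<longrightarrow> bag_opt m p s bs \<le> c * opt n m p s)"

end

theory Submission
  imports Defs
begin

lemma sum_lessThan_add_split:
  "(\<Sum>k<a+b. (f (k::nat)::real)) = (\<Sum>k<a. f k) + (\<Sum>k<b. f (a+k))"
  by (induction b) (simp_all add: add.assoc)

lemma concat_assign:
  fixes w :: "'a \<Rightarrow> real"
  shows "\<exists>f. (\<forall>k<length (concat L). \<exists>j<length L. f k = g j) \<and>
    (\<forall>i. (\<Sum>k<length (concat L). if f k = i then w (concat L ! k) else 0) =
         (\<Sum>j<length L. if g j = i then sum_list (map w (L!j)) else 0))"
proof (induction L arbitrary: g)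
  case Nil
  then show ?case by simp
next
  case (Cons l L)
  obtain f' where f1: "\<forall>k<length (concat L). \<exists>j<length L. f' k = g (Suc j)"
    and f2: "\<forall>i. (\<Sum>k<length (concat L). if f' k = i then w (concat L ! k) else 0) =
         (\<Sum>j<length L. if g (Suc j) = i then sum_list (map w (L!j)) else 0)"
    using Cons.IH[of "\<lambda>j. g (Suc j)"] by blast
  define f where "f k = (if k < length l then g 0 else f' (k - length l))" for k
  have A: "\<forall>k<length (concat (l # L)). \<exists>j<length (l # L). f k = g j"
  proof (intro allI impI)
    fix k assume k: "k < length (concat (l # L))"
    show "\<exists>j<length (l # L). f k = g j"
    proof (cases "k < length l")
      case True then show ?thesis unfolding f_def by force
    next
      case False
      then have "k - length l < length (concat L)" using k by simp
      then obtain j where "j < length L" "f' (k - length l) = g (Suc j)" using f1 by blast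
      then show ?thesis using False unfolding f_def by (intro exI[of _ "Suc j"]) auto
    qed
  qed
  have B: "(\<Sum>k<length (concat (l # L)). if f k = i then w (concat (l # L) ! k) else 0) =
         (\<Sum>j<length (l # L). if g j = i then sum_list (map w ((l # L)!j)) else 0)" for i
  proof -
    have "(\<Sum>k<length (concat (l # L)). if f k = i then w (concat (l # L) ! k) else 0)
      = (\<Sum>k<length l. if g 0 = i then w (l ! k) else 0) +
        (\<Sum>k<length (concat L). if f' k = i then w (concat L ! k) else 0)"
      unfolding concat.simps length_append sum_lessThan_add_split
      by (intro arg_cong2[where f="(+)"] sum.cong) (auto simp: f_def nth_append)
    also have "(\<Sum>k<length l. if g 0 = i then w (l ! k) else 0) =
       (if g 0 = i then sum_list (map w l) else 0)"
      by (simp add: sum_list_sum_nth atLeast0LessThan)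
    also have "(\<Sum>k<length (concat L). if f' k = i then w (concat L ! k) else 0) =
         (\<Sum>j<length L. if g (Suc j) = i then sum_list (map w (L!j)) else 0)"
      using f2 by blast
    also have "(if g 0 = i then sum_list (map w l) else 0) +
         (\<Sum>j<length L. if g (Suc j) = i then sum_list (map w (L!j)) else 0) =
         (\<Sum>j<length (l # L). if g j = i then sum_list (map w ((l # L)!j)) else 0)"
      unfolding length_Cons sum.lessThan_Suc_shift nth_Cons_0 nth_Cons_Suc by simp
    finally show ?thesis .
  qed
  show ?case using A B by blast
qed

lemma loop_inv:
  assumes "ipr_loop m p sh \<alpha> optc \<rho> M out"
    and "coll_makespan m p sh M \<le> (1 + \<alpha>) * optc"
  shows "\<exists>M'. out = all_bags m M' \<and> coll_makespan m p sh M' \<le> (1 + \<alpha>) * optc"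
  using assms by (induction rule: ipr_loop.induct) auto

lemma mk_cong:
  assumes "\<And>i. i < m \<Longrightarrow> l1 i = l2 i"
  shows "mk m l1 s = mk m l2 s"
  unfolding mk_def using assms by (metis (no_types, lifting) image_cong lessThan_iff)

lemma final:
  assumes m: "0 < m" and bij: "bij_betw \<sigma> {..<m} {..<m}"
  shows "bag_opt m p s (all_bags m M) \<le> coll_makespan m p (s \<circ> \<sigma>) M"
proof -
  let ?L = "map M [0..<m]"
  have cL: "concat ?L = all_bags m M" by (simp add: all_bags_def)
  obtain f where f1: "\<forall>k<length (concat ?L). \<exists>j<length ?L. f k = \<sigma> j"
    and f2: "\<forall>i. (\<Sum>k<length (concat ?L). if f k = i then bagp p (concat ?L ! k) else 0) =
         (\<Sum>j<length ?L. if \<sigma> j = i then sum_list (map (bagp p) (?L!j)) else 0)"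
    using concat_assign[of ?L \<sigma> "bagp p"] by blast
  define bs where "bs = all_bags m M"
  define F where "F = restrict f {..<length bs}"
  have FP: "F \<in> {..<length bs} \<rightarrow>\<^sub>E {..<m}"
    using f1 bij unfolding F_def bs_def cL[symmetric] bij_betw_def by auto
  define load where "load i = (\<Sum>k\<in>{k. k < length bs \<and> F k = i}. bagp p (bs ! k))" for i
  have load_eq: "load (\<sigma> j) = sum_list (map (bagp p) (M j))" if j: "j < m" for j
  proof -
    have "load (\<sigma> j) = (\<Sum>k<length bs. if f k = \<sigma> j then bagp p (bs ! k) else 0)"
      unfolding load_def F_def
      by (subst sum.inter_filter[symmetric]) (auto intro!: sum.cong)
    also have "\<dots> = (\<Sum>j'<m. if \<sigma> j' = \<sigma> j then sum_list (map (bagp p) (map M [0..<m] ! j')) else 0)"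
      using spec[OF f2, of "\<sigma> j"] unfolding bs_def cL by (simp only: length_map length_upt diff_zero)
    also have "\<dots> = (\<Sum>j'<m. if \<sigma> j' = \<sigma> j then sum_list (map (bagp p) (M j')) else 0)"
      by (intro sum.cong) auto
    also have "\<dots> = (\<Sum>j'\<in>{j}. if \<sigma> j' = \<sigma> j then sum_list (map (bagp p) (M j')) else 0)"
    proof (rule sum.mono_neutral_right)
      show "\<forall>i\<in>{..<m} - {j}. (if \<sigma> i = \<sigma> j then sum_list (map (bagp p) (M i)) else 0) = 0"
        using bij j unfolding bij_betw_def inj_on_def by auto
    qed (use j in auto)
    finally show ?thesis by simp
  qed
  have "bag_opt m p s bs \<le> mk m load s"
    unfolding bag_opt_def load_def
  proof (rule Min_le)
    show "finite ((\<lambda>f. mk m (\<lambda>i. \<Sum>k | k < length bs \<and> f k = i. bagp p (bs ! k)) s) `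
       ({..<length bs} \<rightarrow>\<^sub>E {..<m}))"
      by (intro finite_imageI finite_PiE) auto
  qed (rule imageI[OF FP])
  also have "mk m load s = coll_makespan m p (s \<circ> \<sigma>) M"
  proof -
    have "(\<lambda>i. load i / s i) ` {..<m} = (\<lambda>i. load i / s i) ` (\<sigma> ` {..<m})"
      using bij by (simp add: bij_betw_def)
    also have "\<dots> = (\<lambda>j. sum_list (map (bagp p) (M j)) / (s \<circ> \<sigma>) j) ` {..<m}"
      unfolding image_image using load_eq by (auto intro!: image_cong)
    finally show ?thesis unfolding mk_def coll_makespan_def by simp
  qed
  finally show ?thesis unfolding bs_def .
qed

theorem lemma1:
  fixes \<epsilon> \<alpha> \<rho> :: real
  assumes "0 < \<epsilon>" "\<epsilon> < 1" "0 < \<alpha>" "\<alpha> < 1" "1 \<le> \<rho>"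
  shows "ipr_consistent \<alpha> \<epsilon> \<rho> ((1 + \<epsilon>) * (1 + \<alpha>))"
  unfolding ipr_consistent_def
proof (intro allI impI, elim conjE)
  fix n m p s bs
  assume m: "0 < m" and p: "\<forall>j<n. 0 \<le> p j" and s: "\<forall>i<m. 0 < s i"
    and out: "ipr_out n m p s \<alpha> \<epsilon> \<rho> bs"
  obtain \<sigma> B where bij: "bij_betw \<sigma> {..<m} {..<m}"
    and part: "is_partition n m B"
    and mkB: "mk m (\<lambda>i. bagp p (B i)) (s \<circ> \<sigma>) \<le> (1 + \<epsilon>) * opt n m p s"
    and loop: "ipr_loop m p (s \<circ> \<sigma>) \<alpha> (mk m (\<lambda>i. bagp p (B i)) (s \<circ> \<sigma>)) \<rho>
        (\<lambda>i. if i < m then [B i] else []) bs"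
    using out unfolding ipr_out_def by blast
  define optc where "optc = mk m (\<lambda>i. bagp p (B i)) (s \<circ> \<sigma>)"
  have nn: "0 \<le> optc"
  proof -
    have B0: "B 0 \<subseteq> {..<n}" using part m unfolding is_partition_def by blast
    have "0 \<le> bagp p (B 0)" unfolding bagp_def using B0 p by (intro sum_nonneg) auto
    moreover have "0 < s (\<sigma> 0)" using s bij m unfolding bij_betw_def by auto
    ultimately have "0 \<le> bagp p (B 0) / (s \<circ> \<sigma>) 0" by simp
    also have "\<dots> \<le> optc" unfolding optc_def mk_def using m by (intro Max_ge) auto
    finally show ?thesis .
  qed
  have init: "coll_makespan m p (s \<circ> \<sigma>) (\<lambda>i. if i < m then [B i] else []) = optc"
    unfolding coll_makespan_def optc_def by (rule mk_cong) simp
  have "coll_makespan m p (s \<circ> \<sigma>) (\<lambda>i. if i < m then [B i] else []) \<le> (1 + \<alpha>) * optc"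
    using init nn assms by (simp add: algebra_simps)
  then obtain M' where bsM: "bs = all_bags m M'"
    and inv: "coll_makespan m p (s \<circ> \<sigma>) M' \<le> (1 + \<alpha>) * optc"
    using loop_inv[OF loop[folded optc_def]] by blast
  have "bag_opt m p s bs \<le> coll_makespan m p (s \<circ> \<sigma>) M'"
    using final[OF m bij] bsM by simp
  also have "\<dots> \<le> (1 + \<alpha>) * optc" by (rule inv)
  also have "\<dots> \<le> (1 + \<alpha>) * ((1 + \<epsilon>) * opt n m p s)"
    using mkB assms unfolding optc_def by (intro mult_left_mono) auto
  finally show "bag_opt m p s bs \<le> (1 + \<epsilon>) * (1 + \<alpha>) * opt n m p s"
    by (simp add: algebra_simps)
qed

end
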